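(* There is a deterministic distributed dynamic data structure for robust $2$-hop neighborhood listing which handles edge insertions and deletions in $O(1)$ amortized rounds.
   Context: Highly dynamic network model: a synchronous network on a fixed set $V$ of $n$ nodes with unique identifiers starts as the empty graph; at the beginning of round $i$ the graph is $G_i=(V,E_i)$, obtained from the previous graph by an adversary inserting and/or deleting an arbitrary (unbounded) set of edges. At the start of each round every node is notified only of the insertions/deletions of edges incident to it; then each node may send a message of $O(\log n)$ bits to each of its current neighbors. A distributed dynamic data structure consists of a local part $DS_v$ at each node $v$; at the end of every round, $DS_v$ may be queried and must answer immediately, without any further communication, either correctly or with $\texttt{inconsistent}$. The amortized round complexity is at most $c$ if for every round $i$, the number of rounds up to round $i$ in which at least one node $v$ has $DS_v$ in an inconsistent state, divided by the total number of topology changes that occurred up to round $i$, is at most $c$. For an edge $e$, its insertion time $t_e$ is the latest round in which $e$ was inserted (initially $-1$). An edge $e=\{u,w\}$ of $G_i$ is $(v,i)$-robust if $v\in e$, or $\{v,u\}\in E_i$ and $t_e\geq t_{\{v,u\}}$, or $\{v,w\}\in E_i$ and $t_e\geq t_{\{v,w\}}$. Robust $2$-hop neighborhood listing: at the end of round $i$, $DS_v$ must respond to a query $\{u,w\}$ with $\texttt{true}$ if the edge is $(v,i)$-robust, $\texttt{false}$ if it is not, or $\texttt{inconsistent}$. *)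

theory Defs
  imports Complex_Main
begin

text \<open>
  Nodes are natural numbers (their unique identifiers).
  An adversary is a sequence of edge sets E :: nat \<Rightarrow> nat set set, where E 0 = {} is the
  initial (empty) graph and E (Suc i) is the graph G_(i+1) at the beginning of round i+1.
  Edges are 2-element subsets of V.
\<close>

type_synonym msg = "bool list"

text \<open>What a node learns in one round: neighbours of newly inserted incident edges,
  neighbours of deleted incident edges, and the messages received (None = no message).\<close>
type_synonym rnd = "nat set \<times> nat set \<times> (nat \<Rightarrow> msg option)"

type_synonym hist = "rnd list"

text \<open>Deterministic sending function: n, own identifier, history of completed rounds,
  current-round inserted/deleted incident neighbours, target neighbour \<Rightarrow> message.\<close>
type_synonym send_fn = "nat \<Rightarrow> nat \<Rightarrow> hist \<Rightarrow> nat set \<Rightarrow> nat set \<Rightarrow> nat \<Rightarrow> msg option"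

text \<open>Deterministic local query answering (no communication): n, own identifier, full
  local history up to the end of the current round, query pair (u,w) \<Rightarrow>
  Some True / Some False, or None meaning inconsistent.\<close>
type_synonym query_fn = "nat \<Rightarrow> nat \<Rightarrow> hist \<Rightarrow> nat \<Rightarrow> nat \<Rightarrow> bool option"

definition valid_adv :: "nat set \<Rightarrow> (nat \<Rightarrow> nat set set) \<Rightarrow> bool" where
  "valid_adv V E \<longleftrightarrow> E 0 = {} \<and> (\<forall>i. \<forall>e\<in>E i. e \<subseteq> V \<and> card e = 2)"

text \<open>Notifications of node v at the beginning of round Suc i.\<close>
definition ins_nb :: "(nat \<Rightarrow> nat set set) \<Rightarrow> nat \<Rightarrow> nat \<Rightarrow> nat set" where
  "ins_nb E i v = {u. {v,u} \<in> E (Suc i) \<and> {v,u} \<notin> E i}"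

definition del_nb :: "(nat \<Rightarrow> nat set set) \<Rightarrow> nat \<Rightarrow> nat \<Rightarrow> nat set" where
  "del_nb E i v = {u. {v,u} \<in> E i \<and> {v,u} \<notin> E (Suc i)}"

text \<open>H sf n E i v: the local history of node v at the end of round i.\<close>
primrec H :: "send_fn \<Rightarrow> nat \<Rightarrow> (nat \<Rightarrow> nat set set) \<Rightarrow> nat \<Rightarrow> nat \<Rightarrow> hist" where
  "H sf n E 0 = (\<lambda>v. [])"
| "H sf n E (Suc i) = (\<lambda>v. H sf n E i v @
     [(ins_nb E i v, del_nb E i v,
       \<lambda>u. if {u,v} \<in> E (Suc i)
           then sf n u (H sf n E i u) (ins_nb E i u) (del_nb E i u) v
           else None)])"

text \<open>Messages of O(log n) bits: at most K * (ceil(log2 n) + 1) bits.\<close>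
definition msg_bounded :: "send_fn \<Rightarrow> nat \<Rightarrow> nat \<Rightarrow> nat set \<Rightarrow> (nat \<Rightarrow> nat set set) \<Rightarrow> bool" where
  "msg_bounded sf K n V E \<longleftrightarrow>
     (\<forall>i v u m. v \<in> V \<and> {v,u} \<in> E (Suc i) \<and>
        sf n v (H sf n E i v) (ins_nb E i v) (del_nb E i v) u = Some m
        \<longrightarrow> real (length m) \<le> real K * (of_int \<lceil>log 2 (real n)\<rceil> + 1))"

definition changes :: "(nat \<Rightarrow> nat set set) \<Rightarrow> nat \<Rightarrow> nat" where
  "changes E i = card (E (Suc i) - E i) + card (E i - E (Suc i))"

definition ins_time :: "(nat \<Rightarrow> nat set set) \<Rightarrow> nat \<Rightarrow> nat set \<Rightarrow> int" where
  "ins_time E i e =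
     (if \<exists>j<i. e \<in> E (Suc j) \<and> e \<notin> E j
      then int (Suc (GREATEST j. j < i \<and> e \<in> E (Suc j) \<and> e \<notin> E j))
      else -1)"

definition robust :: "(nat \<Rightarrow> nat set set) \<Rightarrow> nat \<Rightarrow> nat \<Rightarrow> nat \<Rightarrow> nat \<Rightarrow> bool" where
  "robust E i v u w \<longleftrightarrow> {u,w} \<in> E i \<and>
     (v = u \<or> v = w
      \<or> ({v,u} \<in> E i \<and> ins_time E i {u,w} \<ge> ins_time E i {v,u})
      \<or> ({v,w} \<in> E i \<and> ins_time E i {u,w} \<ge> ins_time E i {v,w}))"

definition answers_correct :: "send_fn \<Rightarrow> query_fn \<Rightarrow> nat \<Rightarrow> nat set \<Rightarrow> (nat \<Rightarrow> nat set set) \<Rightarrow> bool" where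
  "answers_correct sf qry n V E \<longleftrightarrow>
     (\<forall>i v u w. 1 \<le> i \<and> v \<in> V \<and> u \<in> V \<and> w \<in> V \<and> u \<noteq> w \<longrightarrow>
        qry n v (H sf n E i v) u w \<in> {None, Some (robust E i v u w)})"

definition bad_round :: "send_fn \<Rightarrow> query_fn \<Rightarrow> nat \<Rightarrow> nat set \<Rightarrow> (nat \<Rightarrow> nat set set) \<Rightarrow> nat \<Rightarrow> bool" where
  "bad_round sf qry n V E j \<longleftrightarrow>
     (\<exists>v\<in>V. \<exists>u\<in>V. \<exists>w\<in>V. u \<noteq> w \<and> qry n v (H sf n E (Suc j) v) u w = None)"

definition amortized_bound :: "send_fn \<Rightarrow> query_fn \<Rightarrow> real \<Rightarrow> nat \<Rightarrow> nat set \<Rightarrow> (nat \<Rightarrow> nat set set) \<Rightarrow> bool" where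
  "amortized_bound sf qry c n V E \<longleftrightarrow>
     (\<forall>i. real (card {j. j < i \<and> bad_round sf qry n V E j}) \<le> c * real (\<Sum>j<i. changes E j))"

end

theory Submission imports Defs begin

type_synonym evt = "bool \<times> nat"

definition evs :: "nat set \<Rightarrow> nat set \<Rightarrow> evt list" where
 "evs a b = map (Pair True) (sorted_list_of_set a) @ map (Pair False) (sorted_list_of_set b)"

definition bse :: "evt list \<times> (nat \<Rightarrow> nat) \<Rightarrow> nat set \<Rightarrow> nat \<Rightarrow> nat" where
 "bse st a v = (if v \<in> a then length (fst st) else snd st v)"

definition sstep :: "evt list \<times> (nat \<Rightarrow> nat) \<Rightarrow> nat set \<times> nat set \<Rightarrow> evt list \<times> (nat \<Rightarrow> nat)" where
 "sstep st ab = (fst st @ evs (fst ab) (snd ab),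
    \<lambda>v. min (Suc (bse st (fst ab) v)) (length (fst st) + length (evs (fst ab) (snd ab))))"

definition sstate :: "(nat set \<times> nat set) list \<Rightarrow> evt list \<times> (nat \<Rightarrow> nat)" where
 "sstate nl = foldl sstep ([], \<lambda>_. 0) nl"

function bits :: "nat \<Rightarrow> bool list" where
 "bits w = (if w = 0 then [] else odd w # bits (w div 2))"
 by auto
termination by (relation "measure id") auto

declare bits.simps[simp del]

primrec decode :: "bool list \<Rightarrow> nat" where
 "decode [] = 0" | "decode (b # bs) = (if b then 1 else 0) + 2 * decode bs"

lemma decode_bits: "decode (bits w) = w"
proof (induction w rule: less_induct)
  case (less w)
  show ?case
  proof (cases "w = 0")
    case True then show ?thesis by (simp add: bits.simps)
  next
    case False
    then have "decode (bits w) = (if odd w then 1 else 0) + 2 * decode (bits (w div 2))"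
      by (simp add: bits.simps[of w])
    also have "decode (bits (w div 2)) = w div 2" using less False by simp
    finally show ?thesis by presburger
  qed
qed

lemma length_bits: "w < 2 ^ k \<Longrightarrow> length (bits w) \<le> k"
proof (induction k arbitrary: w)
  case 0 then show ?case by (simp add: bits.simps)
next
  case (Suc k)
  show ?case
  proof (cases "w = 0")
    case True then show ?thesis by (simp add: bits.simps)
  next
    case False
    have "w div 2 < 2 ^ k" using Suc.prems by auto
    then have "length (bits (w div 2)) \<le> k" using Suc.IH by blast
    then show ?thesis using False by (simp add: bits.simps[of w])
  qed
qed

definition msg_of :: "evt list \<times> (nat \<Rightarrow> nat) \<Rightarrow> nat set \<Rightarrow> nat set \<Rightarrow> nat \<Rightarrow> msg" where
 "msg_of st a b v = (let L' = fst st @ evs a b; bs = bse st a v in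
    if bs < length L' then (Suc bs = length L') # fst (L' ! bs) # bits (snd (L' ! bs)) else [True])"

definition mysf :: send_fn where
 "mysf n u h a b v = Some (msg_of (sstate (map (\<lambda>x. (fst x, fst (snd x))) h)) a b v)"

definition applyE :: "evt \<Rightarrow> nat set \<Rightarrow> nat set" where
 "applyE e N = (if fst e then insert (snd e) N else N - {snd e})"

definition applyL :: "evt list \<Rightarrow> nat set \<Rightarrow> nat set" where
 "applyL xs N = foldl (\<lambda>N e. applyE e N) N xs"

definition apply_msg :: "msg \<Rightarrow> nat set \<Rightarrow> nat set" where
 "apply_msg m N = (if 2 \<le> length m then applyE (m ! 1, decode (drop 2 m)) N else N)"

definition rstep :: "nat set \<times> (nat \<Rightarrow> nat set \<times> bool) \<Rightarrow> rnd \<Rightarrow> nat set \<times> (nat \<Rightarrow> nat set \<times> bool)" where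
 "rstep st r = ((fst st - fst (snd r)) \<union> fst r,
    \<lambda>u. case snd (snd r) u of None \<Rightarrow> snd st u
      | Some m \<Rightarrow> (apply_msg m (if u \<in> fst r then {} else fst (snd st u)), hd m))"

definition rstate :: "hist \<Rightarrow> nat set \<times> (nat \<Rightarrow> nat set \<times> bool)" where
 "rstate h = foldl rstep ({}, \<lambda>_. ({}, True)) h"

definition myqry :: query_fn where
 "myqry n v h u w = (let st = rstate h; S = fst st; Kf = snd st in
   if v = u then Some (w \<in> S) else if v = w then Some (u \<in> S)
   else if (\<exists>x\<in>S. \<not> snd (Kf x)) then None
   else Some ((u \<in> S \<and> w \<in> fst (Kf u)) \<or> (w \<in> S \<and> u \<in> fst (Kf w))))"

definition notif :: "(nat \<Rightarrow> nat set set) \<Rightarrow> nat \<Rightarrow> nat \<Rightarrow> (nat set \<times> nat set) list" where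
 "notif E i v = map (\<lambda>j. (ins_nb E j v, del_nb E j v)) [0..<i]"

definition St where "St E t u = sstate (notif E t u)"
definition Lt where "Lt E t u = fst (St E t u)"
definition Pt where "Pt E t u = snd (St E t u)"

lemma St_Suc: "St E (Suc t) u = sstep (St E t u) (ins_nb E t u, del_nb E t u)"
  by (simp add: St_def sstate_def notif_def)

lemma Lt_0: "Lt E 0 u = []" by (simp add: Lt_def St_def sstate_def notif_def)
lemma Pt_0: "Pt E 0 u v = 0" by (simp add: Pt_def St_def sstate_def notif_def)

lemma Lt_Suc: "Lt E (Suc t) u = Lt E t u @ evs (ins_nb E t u) (del_nb E t u)"
  by (simp add: Lt_def St_Suc sstep_def)

lemma Pt_Suc: "Pt E (Suc t) u v = min (Suc (if v \<in> ins_nb E t u then length (Lt E t u) else Pt E t u v))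
   (length (Lt E t u) + length (evs (ins_nb E t u) (del_nb E t u)))"
  by (simp add: Pt_def Lt_def St_Suc sstep_def bse_def)

lemma Pt_le: "Pt E t u v \<le> length (Lt E t u)"
  by (cases t) (auto simp: Pt_0 Lt_0 Pt_Suc Lt_Suc)

lemma Lt_mono: "k \<le> t \<Longrightarrow> length (Lt E k u) \<le> length (Lt E t u)"
proof (induction t rule: dec_induct)
  case base then show ?case by simp
next
  case (step t) then show ?case by (simp add: Lt_Suc)
qed

lemma H_proj: "map (\<lambda>x. (fst x, fst (snd x))) (H sf n E i v) = notif E i v"
  by (induction i arbitrary: v) (auto simp: notif_def)

lemma mysf_H: "mysf n u (H sf n E i u) a b v = Some (msg_of (St E i u) a b v)"
  by (simp add: mysf_def H_proj St_def)

lemma rstate_Suc: "rstate (H mysf n E (Suc t) v) = rstep (rstate (H mysf n E t v))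
   (ins_nb E t v, del_nb E t v, \<lambda>u. if {u,v} \<in> E (Suc t)
       then Some (msg_of (St E t u) (ins_nb E t u) (del_nb E t u) v) else None)"
  by (simp add: rstate_def mysf_H cong: if_cong)

lemma apply_msg_of: "apply_msg (msg_of st a b v) N =
  (if bse st a v < length (fst st @ evs a b) then applyE ((fst st @ evs a b) ! bse st a v) N else N)"
  by (simp add: msg_of_def Let_def apply_msg_def decode_bits)

lemma hd_msg_of: "hd (msg_of st a b v) =
  (min (Suc (bse st a v)) (length (fst st @ evs a b)) = length (fst st @ evs a b))"
  by (auto simp: msg_of_def Let_def)


lemma edge_in_V: "valid_adv V E \<Longrightarrow> {u,w} \<in> E j \<Longrightarrow> w \<in> V \<and> u \<in> V"
  unfolding valid_adv_def by blast

lemma ins_sub: "valid_adv V E \<Longrightarrow> ins_nb E t u \<subseteq> V"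
  unfolding ins_nb_def using edge_in_V by blast
lemma del_sub: "valid_adv V E \<Longrightarrow> del_nb E t u \<subseteq> V"
  unfolding del_nb_def using edge_in_V by blast

lemma applyL_append: "applyL (xs @ ys) N = applyL ys (applyL xs N)"
  by (simp add: applyL_def)

lemma applyL_T: "applyL (map (Pair True) xs) N = N \<union> set xs"
  by (induction xs arbitrary: N) (auto simp: applyL_def applyE_def)
lemma applyL_F: "applyL (map (Pair False) xs) N = N - set xs"
  by (induction xs arbitrary: N) (auto simp: applyL_def applyE_def)

lemma applyL_evs: "finite a \<Longrightarrow> finite b \<Longrightarrow> applyL (evs a b) N = (N \<union> a) - b"
  by (simp add: evs_def applyL_append applyL_T applyL_F)

lemma lemR:
  assumes val: "valid_adv V E" and fin: "finite V" and kt: "k \<le> t"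
  shows "applyL (drop (length (Lt E k u)) (Lt E t u)) {} =
     {w. {u,w} \<in> E t \<and> (\<exists>j. k < j \<and> j \<le> t \<and> {u,w} \<in> E j \<and> {u,w} \<notin> E (j-1))}"
  using kt
proof (induction t rule: dec_induct)
  case base then show ?case by (auto simp: applyL_def)
next
  case (step m)
  have f1: "finite (ins_nb E m u)" using ins_sub[OF val] fin finite_subset by blast
  have f2: "finite (del_nb E m u)" using del_sub[OF val] fin finite_subset by blast
  have le: "length (Lt E k u) \<le> length (Lt E m u)" using Lt_mono step.hyps by blast
  have "applyL (drop (length (Lt E k u)) (Lt E (Suc m) u)) {} =
     (applyL (drop (length (Lt E k u)) (Lt E m u)) {} \<union> ins_nb E m u) - del_nb E m u"
    using le by (simp add: Lt_Suc applyL_append applyL_evs f1 f2)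
  also have "\<dots> = {w. {u,w} \<in> E (Suc m) \<and> (\<exists>j. k < j \<and> j \<le> Suc m \<and> {u,w} \<in> E j \<and> {u,w} \<notin> E (j-1))}"
    (is "?L = ?R")
  proof
    show "?L \<subseteq> ?R"
    proof
      fix w assume "w \<in> ?L"
      then show "w \<in> ?R"
      proof
        assume "w \<in> applyL (drop (length (Lt E k u)) (Lt E m u)) {} \<union> ins_nb E m u" and "w \<notin> del_nb E m u"
        then show ?thesis using step.IH step.hyps(1)
          by (auto simp: ins_nb_def del_nb_def intro: exI[of _ "Suc m"])
      qed
    qed
  next
    show "?R \<subseteq> ?L"
    proof
      fix w assume "w \<in> ?R"
      then obtain j where j: "{u,w} \<in> E (Suc m)" "k < j" "j \<le> Suc m" "{u,w} \<in> E j" "{u,w} \<notin> E (j-1)" by auto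
      show "w \<in> ?L"
      proof (cases "j = Suc m")
        case True then show ?thesis using j by (auto simp: ins_nb_def del_nb_def)
      next
        case False
        then show ?thesis using j step.IH by (auto simp: ins_nb_def del_nb_def)
      qed
    qed
  qed
  finally show ?case .
qed

lemma ins_time_eq:
  assumes "1 \<le> \<tau>" "\<tau> \<le> t" "e \<notin> E (\<tau>-1)" "\<forall>j. \<tau> \<le> j \<and> j \<le> t \<longrightarrow> e \<in> E j"
  shows "ins_time E t e = int \<tau>"
proof -
  let ?P = "\<lambda>j. j < t \<and> e \<in> E (Suc j) \<and> e \<notin> E j"
  have p: "?P (\<tau>-1)" using assms by auto
  have g: "(GREATEST j. ?P j) = \<tau>-1"
  proof (rule Greatest_equality)
    show "?P (\<tau>-1)" by (rule p)
    fix y assume "?P y"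
    then show "y \<le> \<tau>-1" using assms by (metis Suc_diff_1 less_one linorder_not_le not_less_eq_eq
        order_less_le_trans less_imp_le_nat zero_less_one)
  qed
  have ex: "\<exists>j<t. e \<in> E (Suc j) \<and> e \<notin> E j" using p by blast
  show ?thesis unfolding ins_time_def using ex g assms(1) by simp
qed

lemma ins_time_ge:
  assumes "1 \<le> \<tau>"
  shows "int \<tau> \<le> ins_time E t e \<longleftrightarrow> (\<exists>j. \<tau> \<le> j \<and> j \<le> t \<and> e \<in> E j \<and> e \<notin> E (j-1))"
proof -
  let ?P = "\<lambda>j. j < t \<and> e \<in> E (Suc j) \<and> e \<notin> E j"
  show ?thesis
  proof
    assume a: "int \<tau> \<le> ins_time E t e"
    then have ex: "\<exists>j. ?P j" using assms unfolding ins_time_def by (auto split: if_splits)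
    then obtain j0 where "?P j0" by blast
    have gp: "?P (GREATEST j. ?P j)" by (rule GreatestI_nat[where P="?P" and b=t]) (use \<open>?P j0\<close> in auto)
    have "int \<tau> \<le> int (Suc (GREATEST j. ?P j))" using a ex unfolding ins_time_def by simp
    then show "\<exists>j. \<tau> \<le> j \<and> j \<le> t \<and> e \<in> E j \<and> e \<notin> E (j-1)"
      using gp by (intro exI[of _ "Suc (GREATEST j. ?P j)"]) auto
  next
    assume "\<exists>j. \<tau> \<le> j \<and> j \<le> t \<and> e \<in> E j \<and> e \<notin> E (j-1)"
    then obtain j where j: "\<tau> \<le> j" "j \<le> t" "e \<in> E j" "e \<notin> E (j-1)" by blast
    then have pj: "?P (j-1)" using assms by (cases j) auto
    have "j - 1 \<le> (GREATEST j. ?P j)" by (rule Greatest_le_nat[where P="?P" and b=t]) (use pj in auto)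
    moreover have "\<exists>j<t. e \<in> E (Suc j) \<and> e \<notin> E j" using pj by blast
    ultimately show "int \<tau> \<le> ins_time E t e" using pj j assms unfolding ins_time_def by simp
  qed
qed


lemma nbrs: "valid_adv V E \<Longrightarrow> fst (rstate (H mysf n E t v)) = {x. {v,x} \<in> E t}"
proof (induction t)
  case 0 then show ?case by (simp add: rstate_def valid_adv_def)
next
  case (Suc t) then show ?case
    unfolding rstate_Suc by (auto simp: rstep_def ins_nb_def del_nb_def)
qed

lemma take_split: "s \<le> P \<Longrightarrow> P \<le> P' \<Longrightarrow>
   take (P' - s) (drop s xs) = take (P - s) (drop s xs) @ take (P' - P) (drop P xs)"
proof -
  assume a: "s \<le> P" "P \<le> P'"
  have "P' - s = (P - s) + (P' - P)" using a by simp
  then have "take (P' - s) (drop s xs) = take ((P - s) + (P' - P)) (drop s xs)" by simp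
  also have "\<dots> = take (P - s) (drop s xs) @ take (P' - P) (drop (P - s) (drop s xs))"
    by (rule take_add)
  also have "drop (P - s) (drop s xs) = drop P xs" using a by simp
  finally show ?thesis .
qed

lemma step_take: "bs \<le> length L' \<Longrightarrow>
  applyL (take (min (Suc bs) (length L') - bs) (drop bs L')) N = (if bs < length L' then applyE (L'!bs) N else N)"
proof (cases "bs < length L'")
  case True
  then have "take (min (Suc bs) (length L') - bs) (drop bs L') = [L'!bs]"
    by (simp add: Cons_nth_drop_Suc[symmetric])
  then show ?thesis using True by (simp add: applyL_def)
next
  case False
  assume "bs \<le> length L'"
  then show ?thesis using False by (simp add: applyL_def)
qed

definition inv_at where
 "inv_at n E t v u \<longleftrightarrow> (\<exists>\<tau>. 1 \<le> \<tau> \<and> \<tau> \<le> t \<and> {v,u} \<notin> E (\<tau>-1) \<and> (\<forall>j. \<tau> \<le> j \<and> j \<le> t \<longrightarrow> {v,u}\<in>E j)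
    \<and> length (Lt E (\<tau>-1) u) \<le> Pt E t u v
    \<and> snd (rstate (H mysf n E t v)) u =
       (applyL (take (Pt E t u v - length (Lt E (\<tau>-1) u)) (drop (length (Lt E (\<tau>-1) u)) (Lt E t u))) {},
        Pt E t u v = length (Lt E t u)))"

lemma inv_all: "valid_adv V E \<Longrightarrow> \<forall>u. {v,u} \<in> E t \<longrightarrow> inv_at n E t v u"
proof (induction t)
  case 0 then show ?case by (simp add: valid_adv_def)
next
  case (Suc t)
  show ?case
  proof (intro allI impI)
    fix u assume inS: "{v,u} \<in> E (Suc t)"
    let ?st = "St E t u"
    let ?a = "ins_nb E t u" and ?b = "del_nb E t u"
    let ?L = "Lt E t u" and ?L' = "Lt E (Suc t) u"
    let ?bs = "bse ?st ?a v"
    let ?m = "msg_of ?st ?a ?b v"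
    have fst_st: "fst ?st = ?L" by (simp add: Lt_def)
    have L': "fst ?st @ evs ?a ?b = ?L'" by (simp add: Lt_def St_Suc sstep_def)
    have P': "Pt E (Suc t) u v = min (Suc ?bs) (length ?L')"
      by (simp add: Pt_def Lt_def St_Suc sstep_def bse_def)
    have uv: "{u,v} = {v,u}" by blast
    have Kf: "snd (rstate (H mysf n E (Suc t) v)) u =
       (apply_msg ?m (if u \<in> ins_nb E t v then {} else fst (snd (rstate (H mysf n E t v)) u)), hd ?m)"
      using inS uv unfolding rstate_Suc by (simp add: rstep_def)
    have am: "apply_msg ?m N = applyL (take (Pt E (Suc t) u v - ?bs) (drop ?bs ?L')) N" if "?bs \<le> length ?L'" for N
      using step_take[OF that, of N] by (simp add: apply_msg_of L' P')
    have hm: "hd ?m = (Pt E (Suc t) u v = length ?L')" by (simp add: hd_msg_of L' P')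
    have PleL: "Pt E t u v \<le> length ?L" by (rule Pt_le)
    have LL': "length ?L \<le> length ?L'" by (simp add: Lt_Suc)
    show "inv_at n E (Suc t) v u"
    proof (cases "{v,u} \<in> E t")
      case False
      then have ua: "u \<in> ins_nb E t v" and va: "v \<in> ?a" using inS uv by (auto simp: ins_nb_def)
      have bs: "?bs = length ?L" using va by (simp add: bse_def fst_st)
      show ?thesis unfolding inv_at_def Kf
        apply (rule exI[of _ "Suc t"])
        using False inS bs LL' ua am[of "{}"] hm P' by (auto simp: le_Suc_eq)
    next
      case True
      then have ua: "u \<notin> ins_nb E t v" and va: "v \<notin> ?a" using uv by (auto simp: ins_nb_def)
      have bs: "?bs = Pt E t u v" using va by (simp add: bse_def Pt_def)
      obtain \<tau> where tau: "1 \<le> \<tau>" "\<tau> \<le> t" "{v,u} \<notin> E (\<tau>-1)" "\<forall>j. \<tau> \<le> j \<and> j \<le> t \<longrightarrow> {v,u}\<in>E j"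
        "length (Lt E (\<tau>-1) u) \<le> Pt E t u v"
        "snd (rstate (H mysf n E t v)) u =
         (applyL (take (Pt E t u v - length (Lt E (\<tau>-1) u)) (drop (length (Lt E (\<tau>-1) u)) ?L)) {},
          Pt E t u v = length ?L)"
        using Suc.IH Suc.prems True unfolding inv_at_def by blast
      let ?s = "length (Lt E (\<tau>-1) u)"
      let ?P = "Pt E t u v" and ?P' = "Pt E (Suc t) u v"
      have PP': "?P \<le> ?P'" using P' bs PleL LL' by simp
      have tk: "take (?P - ?s) (drop ?s ?L') = take (?P - ?s) (drop ?s ?L)"
        using tau(5) PleL by (simp add: Lt_Suc)
      have "applyL (take (?P' - ?s) (drop ?s ?L')) {} =
            applyL (take (?P' - ?P) (drop ?P ?L')) (applyL (take (?P - ?s) (drop ?s ?L)) {})"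
        using take_split[OF tau(5) PP', of ?L'] tk by (simp add: applyL_append)
      also have "\<dots> = apply_msg ?m (applyL (take (?P - ?s) (drop ?s ?L)) {})"
        using am bs PleL LL' by simp
      finally have eq: "applyL (take (?P' - ?s) (drop ?s ?L')) {} = apply_msg ?m (applyL (take (?P - ?s) (drop ?s ?L)) {})" .
      show ?thesis unfolding inv_at_def Kf
        apply (rule exI[of _ \<tau>])
        using tau inS PP' eq ua hm by (auto simp: le_Suc_eq)
    qed
  qed
qed


lemma done_set:
  assumes val: "valid_adv V E" and fin: "finite V" and e: "{v,x} \<in> E i"
    and dn: "snd (snd (rstate (H mysf n E i v)) x)"
  shows "fst (snd (rstate (H mysf n E i v)) x) = {w. {x,w} \<in> E i \<and> ins_time E i {x,w} \<ge> ins_time E i {v,x}}"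
proof -
  obtain \<tau> where tau: "1 \<le> \<tau>" "\<tau> \<le> i" "{v,x} \<notin> E (\<tau>-1)" "\<forall>j. \<tau> \<le> j \<and> j \<le> i \<longrightarrow> {v,x}\<in>E j"
     "length (Lt E (\<tau>-1) x) \<le> Pt E i x v"
     "snd (rstate (H mysf n E i v)) x =
       (applyL (take (Pt E i x v - length (Lt E (\<tau>-1) x)) (drop (length (Lt E (\<tau>-1) x)) (Lt E i x))) {},
        Pt E i x v = length (Lt E i x))"
    using inv_all[OF val, of v i n] e unfolding inv_at_def by blast
  have it: "ins_time E i {v,x} = int \<tau>" by (rule ins_time_eq) (use tau in auto)
  have P: "Pt E i x v = length (Lt E i x)" using tau(6) dn by simp
  have "fst (snd (rstate (H mysf n E i v)) x) = applyL (drop (length (Lt E (\<tau>-1) x)) (Lt E i x)) {}"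
    using tau(6) P by simp
  also have "\<dots> = {w. {x,w} \<in> E i \<and> (\<exists>j. \<tau>-1 < j \<and> j \<le> i \<and> {x,w} \<in> E j \<and> {x,w} \<notin> E (j-1))}"
    by (rule lemR[OF val fin]) (use tau in auto)
  also have "\<dots> = {w. {x,w} \<in> E i \<and> ins_time E i {x,w} \<ge> ins_time E i {v,x}}"
  proof -
    have q: "\<And>j. (\<tau>-1 < j) = (\<tau> \<le> j)" using tau(1) by auto
    show ?thesis unfolding it q using ins_time_ge[OF tau(1), of E i] by auto
  qed
  finally show ?thesis .
qed

lemma answers:
  assumes val: "valid_adv V E" and fin: "finite V"
  shows "answers_correct mysf myqry n V E"
  unfolding answers_correct_def
proof (intro allI impI)
  fix i v u w :: nat assume a: "1 \<le> i \<and> v \<in> V \<and> u \<in> V \<and> w \<in> V \<and> u \<noteq> w"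
  let ?st = "rstate (H mysf n E i v)"
  have S: "fst ?st = {x. {v,x} \<in> E i}" by (rule nbrs[OF val])
  show "myqry n v (H mysf n E i v) u w \<in> {None, Some (robust E i v u w)}"
  proof (cases "v = u \<or> v = w")
    case True
    then show ?thesis using a S by (auto simp: myqry_def robust_def insert_commute)
  next
    case False
    show ?thesis
    proof (cases "\<exists>x\<in>fst ?st. \<not> snd (snd ?st x)")
      case True
      then show ?thesis using False by (simp add: myqry_def Let_def)
    next
      case nd: False
      have Ku: "u \<in> fst ?st \<Longrightarrow> fst (snd ?st u) = {y. {u,y} \<in> E i \<and> ins_time E i {u,y} \<ge> ins_time E i {v,u}}"
        using done_set[OF val fin] nd S by auto
      have Kw: "w \<in> fst ?st \<Longrightarrow> fst (snd ?st w) = {y. {w,y} \<in> E i \<and> ins_time E i {w,y} \<ge> ins_time E i {v,w}}"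
        using done_set[OF val fin] nd S by auto
      have "myqry n v (H mysf n E i v) u w = Some ((u \<in> fst ?st \<and> w \<in> fst (snd ?st u)) \<or> (w \<in> fst ?st \<and> u \<in> fst (snd ?st w)))"
        using False nd by (simp add: myqry_def Let_def)
      also have "\<dots> = Some (robust E i v u w)"
        using Ku Kw S False by (auto simp: robust_def insert_commute)
      finally show ?thesis by simp
    qed
  qed
qed


primrec Mlag :: "(nat \<Rightarrow> nat set set) \<Rightarrow> nat \<Rightarrow> nat \<Rightarrow> nat" where
  "Mlag E u 0 = 0"
| "Mlag E u (Suc t) = Mlag E u t + length (evs (ins_nb E t u) (del_nb E t u)) - 1"

lemma lag: "length (Lt E t u) - Pt E t u v \<le> Mlag E u t"
proof (induction t)
  case 0 then show ?case by (simp add: Lt_0)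
next
  case (Suc t)
  have "Pt E t u v \<le> length (Lt E t u)" by (rule Pt_le)
  then show ?case using Suc unfolding Pt_Suc Lt_Suc by (auto simp: min_def split: if_splits; arith)
qed

lemma count_lag: "card {j. j < i \<and> 0 < Mlag E u (Suc j)} + Mlag E u i \<le> (\<Sum>j<i. length (evs (ins_nb E j u) (del_nb E j u)))"
proof (induction i)
  case 0 then show ?case by simp
next
  case (Suc i)
  have eq: "{j. j < Suc i \<and> 0 < Mlag E u (Suc j)} = {j. j < i \<and> 0 < Mlag E u (Suc j)} \<union> (if 0 < Mlag E u (Suc i) then {i} else {})"
    by (auto simp: less_Suc_eq)
  have fin: "finite {j. j < i \<and> 0 < Mlag E u (Suc j)}" by simp
  show ?case
  proof (cases "0 < Mlag E u (Suc i)")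
    case True
    then have "card {j. j < Suc i \<and> 0 < Mlag E u (Suc j)} = Suc (card {j. j < i \<and> 0 < Mlag E u (Suc j)})"
      unfolding eq using fin by simp
    then show ?thesis using Suc True by simp
  next
    case False
    then have "card {j. j < Suc i \<and> 0 < Mlag E u (Suc j)} = card {j. j < i \<and> 0 < Mlag E u (Suc j)}"
      unfolding eq by simp
    then show ?thesis using Suc False by simp
  qed
qed

lemma double_count:
  fixes V :: "nat set"
  assumes fin: "finite V" and A: "\<forall>e\<in>A. e \<subseteq> V \<and> card e = 2"
  shows "(\<Sum>x\<in>V. card {w. {x,w} \<in> A}) \<le> 2 * card A"
proof -
  have fA: "finite A" using A fin by (meson Pow_iff finite_Pow_iff rev_finite_subset subsetI)
  let ?B = "\<lambda>x. {w. {x,w} \<in> A}"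
  have fB: "\<forall>x\<in>V. finite (?B x)"
  proof
    fix x assume "x \<in> V"
    have "?B x \<subseteq> V" using A by blast
    then show "finite (?B x)" using fin finite_subset by blast
  qed
  have "(\<Sum>x\<in>V. card (?B x)) = card (Sigma V ?B)" using card_SigmaI[OF fin fB] by simp
  also have "\<dots> \<le> card (A \<times> (UNIV :: bool set))"
  proof (rule card_inj_on_le)
    show "inj_on (\<lambda>(x,w). ({x,w}, x < w)) (Sigma V ?B)"
    proof (rule inj_onI)
      fix p q assume p: "p \<in> Sigma V ?B" and q: "q \<in> Sigma V ?B"
        and eq: "(\<lambda>(x,w). ({x,w}, x < w)) p = (\<lambda>(x,w). ({x,w}, x < w)) q"
      obtain x w where pp: "p = (x,w)" by (cases p)
      obtain x' w' where qq: "q = (x',w')" by (cases q)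
      have "card {x,w} = 2" using p A pp by auto
      then have ne: "x \<noteq> w" by (auto simp: card_insert_if split: if_splits)
      have "{x,w} = {x',w'}" "(x < w) = (x' < w')" using eq pp qq by auto
      then show "p = q" using ne pp qq by (auto simp: doubleton_eq_iff)
    qed
    show "(\<lambda>(x,w). ({x,w}, x < w)) ` Sigma V ?B \<subseteq> A \<times> UNIV" by auto
    show "finite (A \<times> (UNIV :: bool set))" using fA by simp
  qed
  also have "\<dots> = 2 * card A" by (simp add: card_cartesian_product)
  finally show ?thesis .
qed

lemma sum_evs:
  assumes val: "valid_adv V E" and fin: "finite V"
  shows "(\<Sum>x\<in>V. length (evs (ins_nb E j x) (del_nb E j x))) \<le> 2 * changes E j"
proof -
  have A1: "\<forall>e\<in>E (Suc j) - E j. e \<subseteq> V \<and> card e = 2" using val unfolding valid_adv_def by blast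
  have A2: "\<forall>e\<in>E j - E (Suc j). e \<subseteq> V \<and> card e = 2" using val unfolding valid_adv_def by blast
  have i: "\<And>x. ins_nb E j x = {w. {x,w} \<in> E (Suc j) - E j}" by (auto simp: ins_nb_def)
  have d: "\<And>x. del_nb E j x = {w. {x,w} \<in> E j - E (Suc j)}" by (auto simp: del_nb_def)
  have "(\<Sum>x\<in>V. length (evs (ins_nb E j x) (del_nb E j x))) =
     (\<Sum>x\<in>V. card {w. {x,w} \<in> E (Suc j) - E j}) + (\<Sum>x\<in>V. card {w. {x,w} \<in> E j - E (Suc j)})"
    by (simp add: evs_def i d sum.distrib)
  also have "\<dots> \<le> 2 * card (E (Suc j) - E j) + 2 * card (E j - E (Suc j))"
    using double_count[OF fin A1] double_count[OF fin A2] by simp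
  finally show ?thesis by (simp add: changes_def)
qed

lemma bad_lag:
  assumes val: "valid_adv V E" and b: "bad_round mysf myqry n V E j"
  shows "\<exists>x\<in>V. 0 < Mlag E x (Suc j)"
proof -
  obtain v u w where vuw: "v \<in> V" "u \<in> V" "w \<in> V" "u \<noteq> w"
    and N: "myqry n v (H mysf n E (Suc j) v) u w = None"
    using b unfolding bad_round_def by blast
  let ?st = "rstate (H mysf n E (Suc j) v)"
  obtain x where x: "x \<in> fst ?st" "\<not> snd (snd ?st x)"
    using N by (auto simp: myqry_def Let_def split: if_splits)
  have e: "{v,x} \<in> E (Suc j)" using x(1) unfolding nbrs[OF val] by simp
  have "inv_at n E (Suc j) v x" using inv_all[OF val] e by blast
  then have "Pt E (Suc j) x v \<noteq> length (Lt E (Suc j) x)" using x(2) unfolding inv_at_def by auto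
  then have "0 < length (Lt E (Suc j) x) - Pt E (Suc j) x v" using Pt_le[of E "Suc j" x v] by simp
  then have "0 < Mlag E x (Suc j)" using lag[of E "Suc j" x v] by simp
  moreover have "x \<in> V" using edge_in_V[OF val e] by simp
  ultimately show ?thesis by blast
qed

lemma amortized:
  assumes val: "valid_adv V E" and fin: "finite V"
  shows "amortized_bound mysf myqry 2 n V E"
  unfolding amortized_bound_def
proof
  fix i
  have sub: "{j. j < i \<and> bad_round mysf myqry n V E j} \<subseteq> (\<Union>x\<in>V. {j. j < i \<and> 0 < Mlag E x (Suc j)})"
    using bad_lag[OF val] by blast
  have "card {j. j < i \<and> bad_round mysf myqry n V E j} \<le> card (\<Union>x\<in>V. {j. j < i \<and> 0 < Mlag E x (Suc j)})"
    by (rule card_mono) (use sub fin in auto)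
  also have "\<dots> \<le> (\<Sum>x\<in>V. card {j. j < i \<and> 0 < Mlag E x (Suc j)})"
    by (rule card_UN_le[OF fin])
  also have "\<dots> \<le> (\<Sum>x\<in>V. \<Sum>j<i. length (evs (ins_nb E j x) (del_nb E j x)))"
  proof (rule sum_mono)
    fix x show "card {j. j < i \<and> 0 < Mlag E x (Suc j)} \<le> (\<Sum>j<i. length (evs (ins_nb E j x) (del_nb E j x)))"
      using count_lag[of i E x] by linarith
  qed
  also have "\<dots> = (\<Sum>j<i. \<Sum>x\<in>V. length (evs (ins_nb E j x) (del_nb E j x)))"
    by (rule sum.swap)
  also have "\<dots> \<le> (\<Sum>j<i. 2 * changes E j)"
    by (rule sum_mono) (rule sum_evs[OF val fin])
  also have "\<dots> = 2 * (\<Sum>j<i. changes E j)" by (simp add: sum_distrib_left)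
  finally have "card {j. j < i \<and> bad_round mysf myqry n V E j} \<le> 2 * (\<Sum>j<i. changes E j)" .
  then show "real (card {j. j < i \<and> bad_round mysf myqry n V E j}) \<le> 2 * real (\<Sum>j<i. changes E j)"
    by (metis of_nat_le_iff of_nat_mult of_nat_numeral)
qed


lemma evs_in_V: assumes val: "valid_adv V E" and fin: "finite V"
  shows "e \<in> set (Lt E t u) \<Longrightarrow> snd e \<in> V"
proof (induction t)
  case 0 then show ?case by (simp add: Lt_0)
next
  case (Suc t)
  have f1: "finite (ins_nb E t u)" using ins_sub[OF val] fin finite_subset by blast
  have f2: "finite (del_nb E t u)" using del_sub[OF val] fin finite_subset by blast
  show ?case using Suc f1 f2 ins_sub[OF val, of t u] del_sub[OF val, of t u]
    by (auto simp: Lt_Suc evs_def)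
qed

lemma logbound: assumes "1 \<le> n" shows "n \<le> 2 ^ nat \<lceil>log 2 (real n)\<rceil>"
proof -
  have l0: "0 \<le> log 2 (real n)" using assms by simp
  have "real n = 2 powr (log 2 (real n))" using assms by simp
  also have "\<dots> \<le> 2 powr (real_of_int \<lceil>log 2 (real n)\<rceil>)" by simp
  also have "real_of_int \<lceil>log 2 (real n)\<rceil> = real (nat \<lceil>log 2 (real n)\<rceil>)" using l0 by simp
  also have "2 powr real (nat \<lceil>log 2 (real n)\<rceil>) = 2 ^ nat \<lceil>log 2 (real n)\<rceil>"
    by (simp add: powr_realpow)
  finally have "real n \<le> 2 ^ nat \<lceil>log 2 (real n)\<rceil>" .
  then show ?thesis by (metis of_nat_le_iff of_nat_numeral of_nat_power)
qed

lemma msgb: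
  assumes val: "valid_adv V E" and fin: "finite V" and cn: "card V = n" and Vd: "V \<subseteq> {..< n ^ d}"
  shows "msg_bounded mysf (d+2) n V E"
  unfolding msg_bounded_def
proof (intro allI impI)
  fix i v u m assume a: "v \<in> V \<and> {v, u} \<in> E (Suc i) \<and>
          mysf n v (H mysf n E i v) (ins_nb E i v) (del_nb E i v) u = Some m"
  let ?c = "nat \<lceil>log 2 (real n)\<rceil>"
  have n1: "1 \<le> n" using a cn fin by (metis One_nat_def Suc_leI card_gt_0_iff empty_iff)
  have l0: "0 \<le> log 2 (real n)" using n1 by simp
  have ci: "real_of_int \<lceil>log 2 (real n)\<rceil> = real ?c" using l0 by simp
  have m: "m = msg_of (St E i v) (ins_nb E i v) (del_nb E i v) u" using a by (simp add: mysf_H)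
  let ?L' = "fst (St E i v) @ evs (ins_nb E i v) (del_nb E i v)"
  have L': "?L' = Lt E (Suc i) v" by (simp add: Lt_def St_Suc sstep_def)
  have len: "length m \<le> 2 + ?c * d"
  proof (cases "bse (St E i v) (ins_nb E i v) u < length ?L'")
    case True
    let ?w = "snd (?L' ! bse (St E i v) (ins_nb E i v) u)"
    have "?w \<in> V" using evs_in_V[OF val fin] True L' by (metis nth_mem)
    then have "?w < n ^ d" using Vd by auto
    also have "n ^ d \<le> (2 ^ ?c) ^ d" by (rule power_mono[OF logbound[OF n1]]) simp
    also have "\<dots> = 2 ^ (?c * d)" by (simp add: power_mult)
    finally have "length (bits ?w) \<le> ?c * d" by (rule length_bits)
    then show ?thesis using True m by (simp add: msg_of_def Let_def)
  next
    case False
    then show ?thesis using m by (simp add: msg_of_def Let_def)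
  qed
  have "2 + ?c * d \<le> (d + 2) * (?c + 1)" by (simp add: algebra_simps)
  then have "length m \<le> (d + 2) * (?c + 1)" using len by linarith
  then have "real (length m) \<le> real ((d + 2) * (?c + 1))" by (simp only: of_nat_le_iff)
  then show "real (length m) \<le> real (d + 2) * (real_of_int \<lceil>log 2 (real n)\<rceil> + 1)"
    unfolding ci by (simp add: algebra_simps)
qed

theorem theorem9:
  shows "\<forall>d::nat. \<exists>(sf::send_fn) (qry::query_fn) (K::nat) (c::real).
           \<forall>(n::nat) (V::nat set) (E::nat \<Rightarrow> nat set set).
             finite V \<and> card V = n \<and> V \<subseteq> {..< n ^ d} \<and> valid_adv V E \<longrightarrow>
               msg_bounded sf K n V E \<and> answers_correct sf qry n V E \<and>
               amortized_bound sf qry c n V E"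
proof
  fix d :: nat
  show "\<exists>(sf::send_fn) (qry::query_fn) (K::nat) (c::real).
           \<forall>(n::nat) (V::nat set) (E::nat \<Rightarrow> nat set set).
             finite V \<and> card V = n \<and> V \<subseteq> {..< n ^ d} \<and> valid_adv V E \<longrightarrow>
               msg_bounded sf K n V E \<and> answers_correct sf qry n V E \<and>
               amortized_bound sf qry c n V E"
    apply (rule exI[of _ mysf], rule exI[of _ myqry], rule exI[of _ "d+2"], rule exI[of _ 2])
    using msgb answers amortized by blast
qed

end
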